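(* Let $T>0$, $I=[0,T]$. Let $\Phi:\mathbb{R}\to\mathbb{R}$ be a strictly increasing homeomorphism; $a\in C(I\times\mathbb{R},\mathbb{R})$ with $a(t,x)\ge h(t)$ for all $(t,x)\in I\times\mathbb{R}$, where $h\in C(I,\mathbb{R})$, $h\ge0$ and $1/h\in L^p(I)$ for some $p>1$; $f:I\times\mathbb{R}^2\to\mathbb{R}$ Carathéodory, and assume that for every $R>0$ and every non-negative $\gamma\in L^p(I)$ there is a non-negative $h_{R,\gamma}\in L^p(I)$ with $|f(t,x,y(t))|\le h_{R,\gamma}(t)$ for a.e. $t\in I$, every $|x|\le R$ and every $y\in L^p(I)$ with $|y|\le\gamma$ a.e. For every $n\in\mathbb{N}$ let $x_n\in W^{1,p}(I)$ be a solution of $(\Phi(a(t,x(t))x'(t)))'=f(t,x(t),x'(t))$ a.e. on $I$, and suppose there exist $M,L>0$ with $\sup_I|x_n|\le M$ and $\sup_I|\mathcal{A}_{x_n}|\le L$ for every $n$. Then there exist a subsequence $\{x_{n_k}\}_k$ and a solution $x_0\in W^{1,p}(I)$ of the same equation such that $x_{n_k}(t)\to x_0(t)$ and $\mathcal{A}_{x_{n_k}}(t)\to\mathcal{A}_{x_0}(t)$ for every $t\in I$ as $k\to\infty$.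
   Context: A continuous $x$ is a solution of the equation if $x\in W^{1,1}(I)$, $t\mapsto\Phi(a(t,x(t))x'(t))\in W^{1,1}(I)$ and its derivative equals $f(t,x(t),x'(t))$ a.e. For such $x$, $\mathcal{A}_x$ is the unique continuous function on $I$ equal to $a(t,x(t))x'(t)$ a.e. Carathéodory: measurable in $t$ for every $(x,y)$, continuous in $(x,y)$ for a.e. $t$. *)

theory Defs
  imports "HOL-Analysis.Analysis"
begin

definition Lp_on :: "real \<Rightarrow> real \<Rightarrow> (real \<Rightarrow> real) \<Rightarrow> bool" where
  "Lp_on T p g \<longleftrightarrow> set_borel_measurable lborel {0..T} g
     \<and> set_integrable lborel {0..T} (\<lambda>t. \<bar>g t\<bar> powr p)"

text \<open>A continuous function x on I belongs to W^{1,1}(I) with (weak/a.e.) derivative x':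
  x' is Lebesgue integrable on I and x is its indefinite integral (absolute continuity).\<close>
definition W11_with_deriv :: "real \<Rightarrow> (real \<Rightarrow> real) \<Rightarrow> (real \<Rightarrow> real) \<Rightarrow> bool" where
  "W11_with_deriv T x x' \<longleftrightarrow> set_integrable lborel {0..T} x'
     \<and> (\<forall>t\<in>{0..T}. x t = x 0 + (LINT s:{0..t}|lborel. x' s))"

definition is_solution ::
  "real \<Rightarrow> (real \<Rightarrow> real) \<Rightarrow> (real \<Rightarrow> real \<Rightarrow> real) \<Rightarrow> (real \<Rightarrow> real \<Rightarrow> real \<Rightarrow> real)
     \<Rightarrow> (real \<Rightarrow> real) \<Rightarrow> (real \<Rightarrow> real) \<Rightarrow> bool" where
  "is_solution T \<Phi> a f x x' \<longleftrightarrow> W11_with_deriv T x x'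
     \<and> (\<exists>u u'. W11_with_deriv T u u'
          \<and> (AE t in lborel. t \<in> {0..T} \<longrightarrow> u t = \<Phi> (a t (x t) * x' t))
          \<and> (AE t in lborel. t \<in> {0..T} \<longrightarrow> u' t = f t (x t) (x' t)))"

text \<open>A is the (unique) continuous function on I equal to a(t,x(t)) x'(t) a.e., i.e. A = \<A>_x on I.\<close>
definition is_A_of :: "real \<Rightarrow> (real \<Rightarrow> real \<Rightarrow> real) \<Rightarrow> (real \<Rightarrow> real) \<Rightarrow> (real \<Rightarrow> real)
     \<Rightarrow> (real \<Rightarrow> real) \<Rightarrow> bool" where
  "is_A_of T a x x' A \<longleftrightarrow> continuous_on {0..T} A
     \<and> (AE t in lborel. t \<in> {0..T} \<longrightarrow> A t = a t (x t) * x' t)"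

definition caratheodory :: "real \<Rightarrow> (real \<Rightarrow> real \<Rightarrow> real \<Rightarrow> real) \<Rightarrow> bool" where
  "caratheodory T f \<longleftrightarrow>
     (\<forall>x y. set_borel_measurable lborel {0..T} (\<lambda>t. f t x y))
     \<and> (AE t in lborel. t \<in> {0..T} \<longrightarrow> continuous_on UNIV (\<lambda>(x, y). f t x y))"

end

theory Submission
  imports Defs "HOL-Complex_Analysis.Great_Picard"
begin

lemma abs_le_one_plus_powr:
  fixes y p :: real assumes "p \<ge> 1" shows "\<bar>y\<bar> \<le> 1 + \<bar>y\<bar> powr p"
proof (cases "\<bar>y\<bar> \<le> 1")
  case True then show ?thesis by (smt (verit) powr_ge_zero)
next
  case False
  then have "\<bar>y\<bar> powr 1 \<le> \<bar>y\<bar> powr p" by (intro powr_mono assms) auto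
  then show ?thesis using False by simp
qed

lemma Lp_set_integrable:
  assumes "Lp_on T p g" "p \<ge> 1"
  shows "set_integrable lborel {0..T} g"
proof -
  have m: "set_borel_measurable lborel {0..T} g"
    and i: "set_integrable lborel {0..T} (\<lambda>t. \<bar>g t\<bar> powr p)"
    using assms(1) unfolding Lp_on_def by auto
  have "set_integrable lborel {0..T} (\<lambda>t. 1 + \<bar>g t\<bar> powr p)"
    by (intro set_integral_add(1) borel_integrable_atLeastAtMost' continuous_on_const i)
  then show ?thesis
    by (rule set_integrable_bound[OF _ m])
       (auto intro!: AE_I2 simp: abs_le_one_plus_powr[OF assms(2)]
             intro: order_trans[OF abs_le_one_plus_powr[OF assms(2)]])
qed

lemma W11_integral:
  assumes "W11_with_deriv T y y'" "t \<in> {0..T}"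
  shows "y t = y 0 + integral {0..t} y'" "y' integrable_on {0..t}"
proof -
  have yi: "set_integrable lborel {0..T} y'"
    using assms(1) unfolding W11_with_deriv_def by (rule conjunct1)
  have ye: "y t = y 0 + (LINT s:{0..t}|lborel. y' s)"
    using assms(1) assms(2) unfolding W11_with_deriv_def by blast
  have sub: "{0..t} \<subseteq> {0..T}" using assms(2) by auto
  have si: "set_integrable lborel {0..t} y'"
    by (rule set_integrable_subset[OF yi _ sub]) simp
  show "y t = y 0 + integral {0..t} y'"
    using ye unfolding set_borel_integral_eq_integral(2)[OF si] .
  show "y' integrable_on {0..t}" using set_borel_integral_eq_integral(1)[OF si] .
qed

lemma W11_cont:
  assumes "W11_with_deriv T y y'"
  shows "continuous_on {0..T} y"
proof -
  have si: "y' integrable_on {0..T}"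
    using assms by (intro set_borel_integral_eq_integral(1)) (auto simp: W11_with_deriv_def)
  have "continuous_on {0..T} (\<lambda>t. y 0 + integral {0..t} y')"
    by (intro continuous_intros indefinite_integral_continuous_1 si)
  moreover have "\<And>t. t \<in> {0..T} \<Longrightarrow> y t = y 0 + integral {0..t} y'"
    by (rule W11_integral(1)[OF assms])
  ultimately show ?thesis
    using continuous_on_cong[of "{0..T}" "{0..T}" y "\<lambda>t. y 0 + integral {0..t} y'"] by blast
qed

lemma W11_mod_le:
  assumes W: "W11_with_deriv T y y'" and g: "set_integrable lborel {0..T} g"
    and bd: "AE t in lborel. t \<in> {0..T} \<longrightarrow> \<bar>y' t\<bar> \<le> g t"
    and st: "s \<in> {0..T}" "t \<in> {0..T}" "s \<le> t"
  shows "\<bar>y t - y s\<bar> \<le> integral {0..t} g - integral {0..s} g"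
proof -
  have yi: "set_integrable lborel {0..T} y'" using W by (auto simp: W11_with_deriv_def)
  have yst: "set_integrable lborel {s..t} y'" "set_integrable lborel {s..t} g"
    using st by (auto intro!: set_integrable_subset[OF yi] set_integrable_subset[OF g])
  have y0t: "y' integrable_on {0..t}" "g integrable_on {0..t}"
    using st by (auto intro!: set_borel_integral_eq_integral(1) set_integrable_subset[OF yi] set_integrable_subset[OF g])
  have c1: "integral {0..s} y' + integral {s..t} y' = integral {0..t} y'"
    using st by (intro Henstock_Kurzweil_Integration.integral_combine y0t) auto
  have c2: "integral {0..s} g + integral {s..t} g = integral {0..t} g"
    using st by (intro Henstock_Kurzweil_Integration.integral_combine y0t) auto
  have e1: "y t - y s = (LINT x:{s..t}|lborel. y' x)"
    using W11_integral(1)[OF W st(1)] W11_integral(1)[OF W st(2)] c1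
      set_borel_integral_eq_integral(2)[OF yst(1)] by simp
  have e2: "integral {0..t} g - integral {0..s} g = (LINT x:{s..t}|lborel. g x)"
    using c2 set_borel_integral_eq_integral(2)[OF yst(2)] by simp
  have bd': "AE x\<in>{s..t} in lborel. \<bar>y' x\<bar> \<le> g x"
    using bd by eventually_elim (use st in auto)
  have "(LINT x:{s..t}|lborel. y' x) \<le> (LINT x:{s..t}|lborel. g x)"
    by (rule set_integral_mono_AE[OF yst]) (use bd' in \<open>eventually_elim, auto\<close>)
  moreover have "(LINT x:{s..t}|lborel. - g x) \<le> (LINT x:{s..t}|lborel. y' x)"
  proof (rule set_integral_mono_AE)
    show "set_integrable lborel {s..t} (\<lambda>x. - g x)"
      using integrable_minus[OF yst(2)[unfolded set_integrable_def]]
      unfolding set_integrable_def by simp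
    show "set_integrable lborel {s..t} y'" by (rule yst(1))
    show "AE x\<in>{s..t} in lborel. - g x \<le> y' x" using bd' by eventually_elim auto
  qed
  ultimately show ?thesis unfolding e1 e2 set_integral_uminus[OF yst(2)] by linarith
qed

lemma W11_mod:
  assumes W: "W11_with_deriv T y y'" and g: "set_integrable lborel {0..T} g"
    and bd: "AE t in lborel. t \<in> {0..T} \<longrightarrow> \<bar>y' t\<bar> \<le> g t"
    and st: "s \<in> {0..T}" "t \<in> {0..T}"
  shows "\<bar>y t - y s\<bar> \<le> \<bar>integral {0..t} g - integral {0..s} g\<bar>"
proof (cases "s \<le> t")
  case True then show ?thesis using W11_mod_le[OF W g bd st] by linarith
next
  case False then show ?thesis using W11_mod_le[OF W g bd st(2,1)] by linarith
qed

lemma ae_dense: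
  fixes T t0 d :: real
  assumes ae: "AE t in lborel. t \<in> {0..T} \<longrightarrow> P t" and T: "T > 0" and t0: "t0 \<in> {0..T}" and d: "d > 0"
  shows "\<exists>t\<in>{0..T}. \<bar>t - t0\<bar> < d \<and> P t"
proof (rule ccontr)
  assume na: "\<not> ?thesis"
  define c where "c = max 0 (t0 - d/2)"
  define e where "e = min T (t0 + d/2)"
  have ce: "c < e" using T t0 d unfolding c_def e_def by auto
  have sub: "\<And>t. t \<in> {c..e} \<Longrightarrow> t \<in> {0..T} \<and> \<bar>t - t0\<bar> < d"
    using t0 d unfolding c_def e_def by auto
  have "AE t in lborel. t \<notin> {c..e}"
    using ae by eventually_elim (use sub na in blast)
  then have "emeasure lborel {c..e} = 0"
    by (subst (asm) AE_iff_measurable[of "{c..e}"]) auto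
  then show False using ce by simp
qed

lemma ae_cont_eq:
  fixes f g :: "real \<Rightarrow> real"
  assumes f: "continuous_on {0..T} f" and g: "continuous_on {0..T} g"
    and ae: "AE t in lborel. t \<in> {0..T} \<longrightarrow> f t = g t" and T: "T > 0" and t0: "t0 \<in> {0..T}"
  shows "f t0 = g t0"
proof (rule ccontr)
  assume ne: "f t0 \<noteq> g t0"
  have "continuous_on {0..T} (\<lambda>t. f t - g t)" using f g by (intro continuous_intros)
  then obtain d where d: "d > 0" and
    dd: "\<forall>t\<in>{0..T}. dist t t0 < d \<longrightarrow> dist (f t - g t) (f t0 - g t0) < \<bar>f t0 - g t0\<bar>"
    using t0 ne unfolding continuous_on_iff by (metis zero_less_abs_iff right_minus_eq)
  obtain t where "t \<in> {0..T}" "\<bar>t - t0\<bar> < d" "f t = g t"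
    using ae_dense[OF ae T t0 d] by blast
  with dd show False by (auto simp: dist_real_def)
qed

lemma aux_bd:
  fixes h a y L :: real
  assumes "0 < h" "h \<le> a" "\<bar>a * y\<bar> \<le> L"
  shows "\<bar>y\<bar> \<le> L * (1 / h)"
proof -
  have "\<bar>y\<bar> * h \<le> \<bar>y\<bar> * a" using assms by (intro mult_left_mono) auto
  also have "\<dots> = \<bar>a * y\<bar>" using assms by (simp add: abs_mult)
  finally have "\<bar>y\<bar> * h \<le> L" using assms by linarith
  then show ?thesis using assms(1) by (simp add: pos_le_divide_eq)
qed

lemma dom_conv_sub:
  fixes s :: "nat \<Rightarrow> real \<Rightarrow> real" and g w :: "real \<Rightarrow> real"
  assumes ms: "\<And>k. (\<lambda>t. indicator E t *\<^sub>R s k t) \<in> borel_measurable lborel"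
    and mg: "(\<lambda>t. indicator E t *\<^sub>R g t) \<in> borel_measurable lborel"
    and w: "set_integrable lborel E w"
    and lim: "AE t in lborel. t \<in> E \<longrightarrow> (\<lambda>k. s k t) \<longlonglongrightarrow> g t"
    and bd: "\<And>k. AE t in lborel. t \<in> E \<longrightarrow> \<bar>s k t\<bar> \<le> w t"
    and S: "S \<in> sets lborel" "S \<subseteq> E"
  shows "set_integrable lborel S g" "(\<lambda>k. LINT t:S|lborel. s k t) \<longlonglongrightarrow> (LINT t:S|lborel. g t)"
proof -
  have eqS: "(\<lambda>t. indicator S t *\<^sub>R \<phi> t) = (\<lambda>t. indicator S t * (indicator E t *\<^sub>R \<phi> t))"
    for \<phi> :: "real \<Rightarrow> real"
    using S(2) by (auto simp: indicator_def fun_eq_iff)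
  have ms': "(\<lambda>t. indicator S t *\<^sub>R s k t) \<in> borel_measurable lborel" for k
    unfolding eqS by (intro borel_measurable_times borel_measurable_indicator S(1) ms)
  have mg': "(\<lambda>t. indicator S t *\<^sub>R g t) \<in> borel_measurable lborel"
    unfolding eqS by (intro borel_measurable_times borel_measurable_indicator S(1) mg)
  have wS: "integrable lborel (\<lambda>t. indicator S t *\<^sub>R w t)"
    using set_integrable_subset[OF w S] unfolding set_integrable_def .
  have lim': "AE t in lborel. (\<lambda>k. indicator S t *\<^sub>R s k t) \<longlonglongrightarrow> indicator S t *\<^sub>R g t"
    using lim
  proof eventually_elim
    case (elim t)
    then show ?case using S(2) by (cases "t \<in> S") auto
  qed
  have bd': "AE t in lborel. norm (indicator S t *\<^sub>R s k t) \<le> indicator S t *\<^sub>R w t" for k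
    using bd[of k]
  proof eventually_elim
    case (elim t)
    then show ?case using S(2) by (cases "t \<in> S") auto
  qed
  show "set_integrable lborel S g"
    unfolding set_integrable_def by (rule integrable_dominated_convergence[OF mg' ms' wS lim' bd'])
  show "(\<lambda>k. LINT t:S|lborel. s k t) \<longlonglongrightarrow> (LINT t:S|lborel. g t)"
    unfolding set_lebesgue_integral_def by (rule integral_dominated_convergence[OF mg' ms' wS lim' bd'])
qed

lemma AA_pointwise:
  fixes F :: "nat \<Rightarrow> real \<Rightarrow> real" and G :: "real \<Rightarrow> real" and T B :: real
  assumes B: "\<And>n t. t \<in> {0..T} \<Longrightarrow> \<bar>F n t\<bar> \<le> B"
    and G: "continuous_on {0..T} G"
    and md: "\<And>n s t. s \<in> {0..T} \<Longrightarrow> t \<in> {0..T} \<Longrightarrow> \<bar>F n t - F n s\<bar> \<le> \<bar>G t - G s\<bar>"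
  obtains g k where "continuous_on {0..T} g" "strict_mono (k :: nat \<Rightarrow> nat)"
    "\<And>t. t \<in> {0..T} \<Longrightarrow> (\<lambda>n. F (k n) t) \<longlonglongrightarrow> g t"
proof -
  have eq: "\<exists>d. 0 < d \<and> (\<forall>n y. y \<in> {0..T} \<and> norm (x - y) < d \<longrightarrow> norm (F n x - F n y) < e)"
    if x: "x \<in> {0..T}" and e: "0 < e" for x e :: real
  proof -
    obtain d where d: "d > 0" "\<forall>y\<in>{0..T}. dist y x < d \<longrightarrow> dist (G y) (G x) < e"
      using G x e unfolding continuous_on_iff by blast
    show ?thesis
    proof (intro exI conjI allI impI)
      fix n :: nat and y :: real assume y: "y \<in> {0..T} \<and> norm (x - y) < d"
      have "\<bar>G y - G x\<bar> < e" using d y by (auto simp: dist_real_def abs_minus_commute)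
      moreover have "\<bar>F n x - F n y\<bar> \<le> \<bar>G y - G x\<bar>"
        using md[where n=n and s=y and t=x] x y by (simp add: abs_minus_commute)
      ultimately show "norm (F n x - F n y) < e" by simp
    qed (rule d(1))
  qed
  obtain g k where g: "continuous_on {0..T} g" "strict_mono (k :: nat \<Rightarrow> nat)"
      "\<And>e. 0 < e \<Longrightarrow> \<exists>N. \<forall>n x. n \<ge> N \<and> x \<in> {0..T} \<longrightarrow> norm(F (k n) x - g x) < e"
    by (rule Arzela_Ascoli[of "{0..T}" F B]) (use B eq in auto)
  show ?thesis
  proof (rule that[OF g(1,2)])
    fix t assume t: "t \<in> {0..T}"
    show "(\<lambda>n. F (k n) t) \<longlonglongrightarrow> g t"
    proof (rule LIMSEQ_I)
      fix r :: real assume "0 < r"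
      then obtain N where "\<forall>n x. n \<ge> N \<and> x \<in> {0..T} \<longrightarrow> norm(F (k n) x - g x) < r" using g(3) by blast
      then show "\<exists>no. \<forall>n\<ge>no. norm (F (k n) t - g t) < r" using t by blast
    qed
  qed
qed

theorem proposition4p2:
  fixes T p M L :: real
    and \<Phi> :: "real \<Rightarrow> real"
    and a :: "real \<Rightarrow> real \<Rightarrow> real"
    and h :: "real \<Rightarrow> real"
    and f :: "real \<Rightarrow> real \<Rightarrow> real \<Rightarrow> real"
    and x x' A :: "nat \<Rightarrow> real \<Rightarrow> real"
  assumes T_pos: "T > 0"
    and p_gt: "p > 1"
    and Phi_mono: "strict_mono \<Phi>"
    and Phi_homeo: "\<exists>\<Psi>. homeomorphism UNIV UNIV \<Phi> \<Psi>"
    and a_cont: "continuous_on ({0..T} \<times> UNIV) (\<lambda>(t, y). a t y)"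
    and a_ge: "\<And>t y. t \<in> {0..T} \<Longrightarrow> a t y \<ge> h t"
    and h_cont: "continuous_on {0..T} h"
    and h_nonneg: "\<And>t. t \<in> {0..T} \<Longrightarrow> h t \<ge> 0"
    and h_nonzero: "AE t in lborel. t \<in> {0..T} \<longrightarrow> h t \<noteq> 0"
    and inv_h_Lp: "Lp_on T p (\<lambda>t. 1 / h t)"
    and f_car: "caratheodory T f"
    and f_bound: "\<And>R \<gamma>. R > 0 \<Longrightarrow> Lp_on T p \<gamma> \<Longrightarrow> (\<forall>t\<in>{0..T}. \<gamma> t \<ge> 0) \<Longrightarrow>
        \<exists>hR. Lp_on T p hR \<and> (\<forall>t\<in>{0..T}. hR t \<ge> 0) \<and>
          (\<forall>y. Lp_on T p y \<and> (AE t in lborel. t \<in> {0..T} \<longrightarrow> \<bar>y t\<bar> \<le> \<gamma> t) \<longrightarrow>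
             (AE t in lborel. t \<in> {0..T} \<longrightarrow>
                (\<forall>z. \<bar>z\<bar> \<le> R \<longrightarrow> \<bar>f t z (y t)\<bar> \<le> hR t)))"
    and sol: "\<And>n. is_solution T \<Phi> a f (x n) (x' n)"
    and W1p: "\<And>n. Lp_on T p (x' n)"
    and A_def: "\<And>n. is_A_of T a (x n) (x' n) (A n)"
    and M_pos: "M > 0" and L_pos: "L > 0"
    and x_bd: "\<And>n t. t \<in> {0..T} \<Longrightarrow> \<bar>x n t\<bar> \<le> M"
    and A_bd: "\<And>n t. t \<in> {0..T} \<Longrightarrow> \<bar>A n t\<bar> \<le> L"
  shows "\<exists>r x0 x0' A0. strict_mono r
     \<and> is_solution T \<Phi> a f x0 x0' \<and> Lp_on T p x0' \<and> is_A_of T a x0 x0' A0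
     \<and> (\<forall>t\<in>{0..T}. (\<lambda>k. x (r k) t) \<longlonglongrightarrow> x0 t)
     \<and> (\<forall>t\<in>{0..T}. (\<lambda>k. A (r k) t) \<longlonglongrightarrow> A0 t)"
proof -
  define E where "E = {0..T}"
  have p1: "p \<ge> 1" using p_gt by simp
  have E0: "0 \<in> E" using T_pos by (simp add: E_def)
  have Esets: "E \<in> sets lborel" by (simp add: E_def)
  obtain \<Psi> where hom: "homeomorphism UNIV UNIV \<Phi> \<Psi>" using Phi_homeo by blast
  have PsiPhi: "\<And>z. \<Psi> (\<Phi> z) = z" and PhiPsi: "\<And>z. \<Phi> (\<Psi> z) = z"
    and contPsi: "continuous_on UNIV \<Psi>" and contPhi: "continuous_on UNIV \<Phi>"
    using hom unfolding homeomorphism_def by auto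

  have "\<forall>n. \<exists>uu. W11_with_deriv T (fst uu) (snd uu)
          \<and> (AE t in lborel. t \<in> {0..T} \<longrightarrow> fst uu t = \<Phi> (a t (x n t) * x' n t))
          \<and> (AE t in lborel. t \<in> {0..T} \<longrightarrow> snd uu t = f t (x n t) (x' n t))"
  proof
    fix n
    obtain uu uu' where "W11_with_deriv T uu uu'"
          "AE t in lborel. t \<in> {0..T} \<longrightarrow> uu t = \<Phi> (a t (x n t) * x' n t)"
          "AE t in lborel. t \<in> {0..T} \<longrightarrow> uu' t = f t (x n t) (x' n t)"
      using sol[of n] unfolding is_solution_def by blast
    then show "\<exists>uu. W11_with_deriv T (fst uu) (snd uu)
          \<and> (AE t in lborel. t \<in> {0..T} \<longrightarrow> fst uu t = \<Phi> (a t (x n t) * x' n t))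
          \<and> (AE t in lborel. t \<in> {0..T} \<longrightarrow> snd uu t = f t (x n t) (x' n t))"
      by (intro exI[of _ "(uu, uu')"]) simp
  qed
  note ex = this
  obtain U where U0: "\<forall>n. W11_with_deriv T (fst (U n)) (snd (U n))
          \<and> (AE t in lborel. t \<in> {0..T} \<longrightarrow> fst (U n) t = \<Phi> (a t (x n t) * x' n t))
          \<and> (AE t in lborel. t \<in> {0..T} \<longrightarrow> snd (U n) t = f t (x n t) (x' n t))"
    by (rule exE[OF choice[OF ex]])
  note U = U0[rule_format]
  define u where "u n = fst (U n)" for n
  define u' where "u' n = snd (U n)" for n
  have Wu: "\<And>n. W11_with_deriv T (u n) (u' n)"
    and u_ae: "\<And>n. AE t in lborel. t \<in> E \<longrightarrow> u n t = \<Phi> (a t (x n t) * x' n t)"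
    and u'_ae: "\<And>n. AE t in lborel. t \<in> E \<longrightarrow> u' n t = f t (x n t) (x' n t)"
    using U unfolding u_def u'_def E_def by auto
  have Wx: "\<And>n. W11_with_deriv T (x n) (x' n)" using sol unfolding is_solution_def by auto
  have A_ae: "\<And>n. AE t in lborel. t \<in> E \<longrightarrow> A n t = a t (x n t) * x' n t"
    and contA: "\<And>n. continuous_on E (A n)"
    using A_def unfolding is_A_of_def E_def by auto
  have pos_ae: "AE t in lborel. t \<in> E \<longrightarrow> h t > 0"
    using h_nonzero by eventually_elim (use h_nonneg in \<open>force simp: E_def\<close>)

  define \<gamma> where "\<gamma> t = L * (1 / h t)" for t
  have ih_meas: "(\<lambda>t. indicator E t *\<^sub>R (1 / h t)) \<in> borel_measurable lborel"
    and ih_int: "set_integrable lborel E (\<lambda>t. \<bar>1 / h t\<bar> powr p)"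
    using inv_h_Lp unfolding Lp_on_def set_borel_measurable_def E_def by auto
  have \<gamma>_Lp: "Lp_on T p \<gamma>"
    unfolding Lp_on_def
  proof
    have "(\<lambda>t. indicator E t *\<^sub>R \<gamma> t) = (\<lambda>t. L * (indicator E t *\<^sub>R (1 / h t)))"
      by (auto simp: \<gamma>_def fun_eq_iff)
    then show "set_borel_measurable lborel {0..T} \<gamma>"
      unfolding set_borel_measurable_def E_def[symmetric]
      using borel_measurable_times[OF borel_measurable_const ih_meas] by simp
    have "\<bar>\<gamma> t\<bar> powr p = L powr p * \<bar>1 / h t\<bar> powr p" for t
    proof -
      have "\<bar>\<gamma> t\<bar> = L * \<bar>1 / h t\<bar>" using L_pos unfolding \<gamma>_def abs_mult by simp
      then show ?thesis by (metis powr_mult abs_ge_zero L_pos less_imp_le)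
    qed
    then have "(\<lambda>t. \<bar>\<gamma> t\<bar> powr p) = (\<lambda>t. L powr p * \<bar>1 / h t\<bar> powr p)" by simp
    then show "set_integrable lborel {0..T} (\<lambda>t. \<bar>\<gamma> t\<bar> powr p)"
      using set_integrable_mult_right[OF ih_int, of "L powr p"] unfolding E_def by simp
  qed
  have \<gamma>_nn: "\<forall>t\<in>{0..T}. \<gamma> t \<ge> 0" using h_nonneg L_pos by (auto simp: \<gamma>_def)
  have \<gamma>_int: "set_integrable lborel E \<gamma>" using Lp_set_integrable[OF \<gamma>_Lp p1] by (simp add: E_def)
  obtain hR where hR_Lp: "Lp_on T p hR" and hR_bd: "\<forall>y. Lp_on T p y \<and> (AE t in lborel. t \<in> {0..T} \<longrightarrow> \<bar>y t\<bar> \<le> \<gamma> t) \<longrightarrow>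
             (AE t in lborel. t \<in> {0..T} \<longrightarrow>
                (\<forall>z. \<bar>z\<bar> \<le> M \<longrightarrow> \<bar>f t z (y t)\<bar> \<le> hR t))"
    using f_bound[OF M_pos \<gamma>_Lp \<gamma>_nn] by blast
  have hR_int: "set_integrable lborel E hR" using Lp_set_integrable[OF hR_Lp p1] by (simp add: E_def)

  have x'_bd: "AE t in lborel. t \<in> E \<longrightarrow> \<bar>x' n t\<bar> \<le> \<gamma> t" for n
    using A_ae[of n] pos_ae
  proof eventually_elim
    case (elim t)
    show ?case
    proof
      assume t: "t \<in> E"
      then have "\<bar>a t (x n t) * x' n t\<bar> \<le> L" using elim A_bd[of t n] by (simp add: E_def)
      then show "\<bar>x' n t\<bar> \<le> \<gamma> t" unfolding \<gamma>_def
        using aux_bd[of "h t" "a t (x n t)" "x' n t" L] elim t a_ge[of t] by (auto simp: E_def)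
    qed
  qed
  have x'_eq: "AE t in lborel. t \<in> E \<longrightarrow> x' n t = A n t / a t (x n t)" for n
    using A_ae[of n] pos_ae
  proof eventually_elim
    case (elim t)
    show ?case
    proof
      assume t: "t \<in> E"
      then have "a t (x n t) > 0" using elim a_ge[of t "x n t"] by (force simp: E_def)
      then show "x' n t = A n t / a t (x n t)" using elim t by simp
    qed
  qed
  have u'_bd: "AE t in lborel. t \<in> E \<longrightarrow> \<bar>u' n t\<bar> \<le> hR t" for n
  proof -
    have "AE t in lborel. t \<in> {0..T} \<longrightarrow> (\<forall>z. \<bar>z\<bar> \<le> M \<longrightarrow> \<bar>f t z (x' n t)\<bar> \<le> hR t)"
      using hR_bd W1p[of n] x'_bd[of n] unfolding E_def by blast
    then show ?thesis using u'_ae[of n]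
      by eventually_elim (use x_bd in \<open>auto simp: E_def\<close>)
  qed

  have u_eq: "u n t = \<Phi> (A n t)" if t: "t \<in> E" for n t
  proof (rule ae_cont_eq[where T=T and f="u n" and g="\<lambda>t. \<Phi> (A n t)"])
    show "continuous_on {0..T} (u n)" by (rule W11_cont[OF Wu])
    show "continuous_on {0..T} (\<lambda>t. \<Phi> (A n t))"
      using continuous_on_compose2[OF contPhi contA[of n]] by (simp add: E_def)
    show "AE t in lborel. t \<in> {0..T} \<longrightarrow> u n t = \<Phi> (A n t)"
      using u_ae[of n] A_ae[of n] by eventually_elim (auto simp: E_def)
  qed (use T_pos t in \<open>auto simp: E_def\<close>)

  define Gx where "Gx t = integral {0..t} \<gamma>" for t
  define Gu where "Gu t = integral {0..t} hR" for t
  have cGx: "continuous_on {0..T} Gx" unfolding Gx_def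
    by (rule indefinite_integral_continuous_1, rule set_borel_integral_eq_integral(1)) (use \<gamma>_int in \<open>simp add: E_def\<close>)
  have cGu: "continuous_on {0..T} Gu" unfolding Gu_def
    by (rule indefinite_integral_continuous_1, rule set_borel_integral_eq_integral(1)) (use hR_int in \<open>simp add: E_def\<close>)
  have modx: "\<bar>x n t - x n s\<bar> \<le> \<bar>Gx t - Gx s\<bar>" if "s \<in> {0..T}" "t \<in> {0..T}" for n s t
    unfolding Gx_def by (rule W11_mod[OF Wx]) (use \<gamma>_int x'_bd that in \<open>auto simp: E_def\<close>)
  have modv: "\<bar>\<Phi> (A n t) - \<Phi> (A n s)\<bar> \<le> \<bar>Gu t - Gu s\<bar>" if "s \<in> {0..T}" "t \<in> {0..T}" for n s t
  proof -
    have "\<bar>u n t - u n s\<bar> \<le> \<bar>Gu t - Gu s\<bar>"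
      unfolding Gu_def by (rule W11_mod[OF Wu]) (use hR_int u'_bd that in \<open>auto simp: E_def\<close>)
    then show ?thesis using u_eq that by (simp add: E_def)
  qed
  have vbd: "\<bar>\<Phi> (A n t)\<bar> \<le> \<bar>\<Phi> L\<bar> + \<bar>\<Phi> (- L)\<bar>" if "t \<in> {0..T}" for n t
  proof -
    have "- L \<le> A n t" "A n t \<le> L" using A_bd[OF that, of n] by auto
    then have "\<Phi> (- L) \<le> \<Phi> (A n t)" "\<Phi> (A n t) \<le> \<Phi> L"
      using strict_mono_less_eq[OF Phi_mono] by auto
    then show ?thesis by linarith
  qed

  obtain V k1 where V: "continuous_on {0..T} V" "strict_mono (k1 :: nat \<Rightarrow> nat)"
      "\<And>t. t \<in> {0..T} \<Longrightarrow> (\<lambda>n. \<Phi> (A (k1 n) t)) \<longlonglongrightarrow> V t"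
    by (rule AA_pointwise[of T "\<lambda>n t. \<Phi> (A n t)" "\<bar>\<Phi> L\<bar> + \<bar>\<Phi> (- L)\<bar>" Gu])
       (use vbd cGu modv in auto)
  obtain X k2 where X: "continuous_on {0..T} X" "strict_mono (k2 :: nat \<Rightarrow> nat)"
      "\<And>t. t \<in> {0..T} \<Longrightarrow> (\<lambda>n. x (k1 (k2 n)) t) \<longlonglongrightarrow> X t"
    by (rule AA_pointwise[of T "\<lambda>n. x (k1 n)" M Gx]) (use x_bd cGx modx in auto)
  define r where "r = k1 \<circ> k2"
  have r: "strict_mono r" unfolding r_def using V(2) X(2) by (rule strict_mono_o)
  have vconv: "(\<lambda>k. \<Phi> (A (r k) t)) \<longlonglongrightarrow> V t" if "t \<in> E" for t
    using LIMSEQ_subseq_LIMSEQ[OF V(3) X(2), of t] that by (simp add: r_def o_def E_def)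
  have xconv: "(\<lambda>k. x (r k) t) \<longlonglongrightarrow> X t" if "t \<in> E" for t
    using X(3)[of t] that by (simp add: r_def E_def)
  define A0 where "A0 t = \<Psi> (V t)" for t
  have Aconv: "(\<lambda>k. A (r k) t) \<longlonglongrightarrow> A0 t" if "t \<in> E" for t
    using continuous_on_tendsto_compose[OF contPsi vconv[OF that]] by (simp add: PsiPhi A0_def)
  have cA0: "continuous_on {0..T} A0"
    unfolding A0_def using continuous_on_compose2[OF contPsi V(1)] by simp
  have a_tend: "(\<lambda>k. a t (x (r k) t)) \<longlonglongrightarrow> a t (X t)" if "t \<in> E" for t
  proof -
    have "((\<lambda>k. (\<lambda>(t, y). a t y) (t, x (r k) t)) \<longlongrightarrow> (\<lambda>(t, y). a t y) (t, X t)) sequentially"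
      by (rule continuous_on_tendsto_compose[OF a_cont])
         (use that xconv[OF that] in \<open>auto intro!: tendsto_Pair simp: E_def\<close>)
    then show ?thesis by simp
  qed

  define x0' where "x0' t = lim (\<lambda>k. indicator E t *\<^sub>R x' (r k) t)" for t
  define u0' where "u0' t = lim (\<lambda>k. indicator E t *\<^sub>R u' (r k) t)" for t
  have x'meas: "(\<lambda>t. indicator E t *\<^sub>R x' n t) \<in> borel_measurable lborel" for n
    using Wx[of n] unfolding W11_with_deriv_def set_integrable_def E_def by auto
  have u'meas: "(\<lambda>t. indicator E t *\<^sub>R u' n t) \<in> borel_measurable lborel" for n
    using Wu[of n] unfolding W11_with_deriv_def set_integrable_def E_def by auto
  have x0'meas: "x0' \<in> borel_measurable lborel"
    unfolding x0'_def by (rule borel_measurable_lim_metric) (rule x'meas)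
  have u0'meas: "u0' \<in> borel_measurable lborel"
    unfolding u0'_def by (rule borel_measurable_lim_metric) (rule u'meas)
  have x0'_ind: "indicator E t *\<^sub>R x0' t = x0' t" for t
    by (cases "t \<in> E") (auto simp: x0'_def limI[OF tendsto_const])
  have u0'_ind: "indicator E t *\<^sub>R u0' t = u0' t" for t
    by (cases "t \<in> E") (auto simp: u0'_def limI[OF tendsto_const])
  have x0'meas': "(\<lambda>t. indicator E t *\<^sub>R x0' t) \<in> borel_measurable lborel"
    using x0'meas by (simp only: x0'_ind)
  have u0'meas': "(\<lambda>t. indicator E t *\<^sub>R u0' t) \<in> borel_measurable lborel"
    using u0'meas by (simp only: u0'_ind)

  have x'_eq_all: "AE t in lborel. \<forall>n. t \<in> E \<longrightarrow> x' n t = A n t / a t (x n t)"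
    by (subst AE_all_countable) (use x'_eq in blast)
  have x'_bd_all: "AE t in lborel. \<forall>n. t \<in> E \<longrightarrow> \<bar>x' n t\<bar> \<le> \<gamma> t"
    by (subst AE_all_countable) (use x'_bd in blast)
  have u'_ae_all: "AE t in lborel. \<forall>n. t \<in> E \<longrightarrow> u' n t = f t (x n t) (x' n t)"
    by (subst AE_all_countable) (use u'_ae in blast)

  have x'conv: "AE t in lborel. t \<in> E \<longrightarrow> (\<lambda>k. x' (r k) t) \<longlonglongrightarrow> A0 t / a t (X t)"
    using x'_eq_all pos_ae
  proof eventually_elim
    case (elim t)
    show ?case
    proof
      assume t: "t \<in> E"
      have "a t (X t) > 0" using elim t a_ge[of t "X t"] by (force simp: E_def)
      then have "(\<lambda>k. A (r k) t / a t (x (r k) t)) \<longlonglongrightarrow> A0 t / a t (X t)"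
        by (intro tendsto_divide Aconv a_tend t) auto
      then show "(\<lambda>k. x' (r k) t) \<longlonglongrightarrow> A0 t / a t (X t)" using elim t by simp
    qed
  qed
  have x0'_ae: "AE t in lborel. t \<in> E \<longrightarrow> x0' t = A0 t / a t (X t)"
    using x'conv by eventually_elim (auto simp: x0'_def limI)
  have x'conv': "AE t in lborel. t \<in> E \<longrightarrow> (\<lambda>k. x' (r k) t) \<longlonglongrightarrow> x0' t"
    using x'conv x0'_ae by eventually_elim auto
  have x0'_bd: "AE t in lborel. t \<in> E \<longrightarrow> \<bar>x0' t\<bar> \<le> \<gamma> t"
    using x'conv' x'_bd_all
  proof eventually_elim
    case (elim t)
    show ?case
    proof
      assume t: "t \<in> E"
      show "\<bar>x0' t\<bar> \<le> \<gamma> t"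
        by (rule LIMSEQ_le_const2[OF tendsto_rabs[OF elim(1)[rule_format, OF t]]])
           (use elim(2) t in auto)
    qed
  qed

  have x0'_int: "set_integrable lborel E x0'"
    by (rule dom_conv_sub(1)[OF x'meas x0'meas' \<gamma>_int x'conv' x'_bd Esets subset_refl])
  have Wx0: "W11_with_deriv T X x0'"
    unfolding W11_with_deriv_def
  proof
    show "set_integrable lborel {0..T} x0'" using x0'_int by (simp add: E_def)
    show "\<forall>t\<in>{0..T}. X t = X 0 + (LINT s:{0..t}|lborel. x0' s)"
    proof
      fix t assume t: "t \<in> {0..T}"
      have l1: "(\<lambda>k. x (r k) t) \<longlonglongrightarrow> X t" using xconv t by (simp add: E_def)
      have "(\<lambda>k. x (r k) 0 + (LINT s:{0..t}|lborel. x' (r k) s)) \<longlonglongrightarrow> X 0 + (LINT s:{0..t}|lborel. x0' s)"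
        by (intro tendsto_add xconv E0 dom_conv_sub(2)[OF x'meas x0'meas' \<gamma>_int x'conv' x'_bd])
           (use t in \<open>auto simp: E_def\<close>)
      moreover have "x (r k) t = x (r k) 0 + (LINT s:{0..t}|lborel. x' (r k) s)" for k
        using Wx[of "r k"] t unfolding W11_with_deriv_def by blast
      ultimately show "X t = X 0 + (LINT s:{0..t}|lborel. x0' s)"
        using LIMSEQ_unique[OF l1] by simp
    qed
  qed
  have Lpx0: "Lp_on T p x0'"
    unfolding Lp_on_def
  proof
    show "set_borel_measurable lborel {0..T} x0'"
      using x0'meas' unfolding set_borel_measurable_def E_def .
    have ig: "set_integrable lborel E (\<lambda>t. \<bar>\<gamma> t\<bar> powr p)" using \<gamma>_Lp unfolding Lp_on_def E_def by auto
    have mp: "(\<lambda>t. \<bar>x0' t\<bar> powr p) \<in> borel_measurable lborel" using x0'meas by measurable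
    have "set_integrable lborel E (\<lambda>t. \<bar>x0' t\<bar> powr p)"
    proof (rule set_integrable_bound[OF ig])
      show "set_borel_measurable lborel E (\<lambda>t. \<bar>x0' t\<bar> powr p)"
        unfolding set_borel_measurable_def
        by (intro borel_measurable_scaleR borel_measurable_indicator Esets mp)
      show "AE t in lborel. t \<in> E \<longrightarrow> norm (\<bar>x0' t\<bar> powr p) \<le> norm (\<bar>\<gamma> t\<bar> powr p)"
        using x0'_bd by eventually_elim (use p1 in \<open>auto intro!: powr_mono2\<close>)
    qed
    then show "set_integrable lborel {0..T} (\<lambda>t. \<bar>x0' t\<bar> powr p)" by (simp add: E_def)
  qed
  have a_ne: "AE t in lborel. t \<in> E \<longrightarrow> a t (X t) * x0' t = A0 t"
    using x0'_ae pos_ae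
  proof eventually_elim
    case (elim t)
    show ?case
    proof
      assume t: "t \<in> E"
      have "a t (X t) > 0" using elim t a_ge[of t "X t"] by (force simp: E_def)
      then show "a t (X t) * x0' t = A0 t" using elim t by simp
    qed
  qed
  have isA: "is_A_of T a X x0' A0"
    unfolding is_A_of_def using cA0 a_ne by (auto simp: E_def)

  have u'conv: "AE t in lborel. t \<in> E \<longrightarrow> (\<lambda>k. u' (r k) t) \<longlonglongrightarrow> f t (X t) (x0' t)"
    using u'_ae_all x'conv' f_car[unfolded caratheodory_def, THEN conjunct2]
  proof eventually_elim
    case (elim t)
    show ?case
    proof
      assume t: "t \<in> E"
      have c: "continuous_on UNIV (\<lambda>(x, y). f t x y)" using elim(3) t by (simp add: E_def)
      have "((\<lambda>k. (\<lambda>(x, y). f t x y) (x (r k) t, x' (r k) t)) \<longlongrightarrow> (\<lambda>(x, y). f t x y) (X t, x0' t)) sequentially"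
        by (rule continuous_on_tendsto_compose[OF c])
           (use elim(2) t xconv[OF t] in \<open>auto intro!: tendsto_Pair\<close>)
      then show "(\<lambda>k. u' (r k) t) \<longlonglongrightarrow> f t (X t) (x0' t)" using elim(1) t by simp
    qed
  qed
  have u0'_ae: "AE t in lborel. t \<in> E \<longrightarrow> u0' t = f t (X t) (x0' t)"
    using u'conv by eventually_elim (auto simp: u0'_def limI)
  have u'conv': "AE t in lborel. t \<in> E \<longrightarrow> (\<lambda>k. u' (r k) t) \<longlonglongrightarrow> u0' t"
    using u'conv u0'_ae by eventually_elim auto
  have u0'_int: "set_integrable lborel E u0'"
    by (rule dom_conv_sub(1)[OF u'meas u0'meas' hR_int u'conv' u'_bd Esets subset_refl])
  have vconv': "(\<lambda>k. u (r k) t) \<longlonglongrightarrow> V t" if "t \<in> E" for t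
    using vconv[OF that] u_eq[OF that] by simp
  have WV: "W11_with_deriv T V u0'"
    unfolding W11_with_deriv_def
  proof
    show "set_integrable lborel {0..T} u0'" using u0'_int by (simp add: E_def)
    show "\<forall>t\<in>{0..T}. V t = V 0 + (LINT s:{0..t}|lborel. u0' s)"
    proof
      fix t assume t: "t \<in> {0..T}"
      have l1: "(\<lambda>k. u (r k) t) \<longlonglongrightarrow> V t" using vconv' t by (simp add: E_def)
      have "(\<lambda>k. u (r k) 0 + (LINT s:{0..t}|lborel. u' (r k) s)) \<longlonglongrightarrow> V 0 + (LINT s:{0..t}|lborel. u0' s)"
        by (intro tendsto_add vconv' E0 dom_conv_sub(2)[OF u'meas u0'meas' hR_int u'conv' u'_bd])
           (use t in \<open>auto simp: E_def\<close>)
      moreover have "u (r k) t = u (r k) 0 + (LINT s:{0..t}|lborel. u' (r k) s)" for k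
        using Wu[of "r k"] t unfolding W11_with_deriv_def by blast
      ultimately show "V t = V 0 + (LINT s:{0..t}|lborel. u0' s)"
        using LIMSEQ_unique[OF l1] by simp
    qed
  qed
  have V_ae: "AE t in lborel. t \<in> {0..T} \<longrightarrow> V t = \<Phi> (a t (X t) * x0' t)"
    using a_ne by eventually_elim (auto simp: E_def A0_def PhiPsi)
  have solX: "is_solution T \<Phi> a f X x0'"
    unfolding is_solution_def using Wx0 WV V_ae u0'_ae by (auto simp: E_def)
  have xc: "\<forall>t\<in>{0..T}. (\<lambda>k. x (r k) t) \<longlonglongrightarrow> X t" using xconv unfolding E_def by blast
  have Ac: "\<forall>t\<in>{0..T}. (\<lambda>k. A (r k) t) \<longlonglongrightarrow> A0 t" using Aconv unfolding E_def by blast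
  show ?thesis
    by (intro exI[of _ r] exI[of _ X] exI[of _ x0'] exI[of _ A0] conjI r solX Lpx0 isA xc Ac)
qed

end
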